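(* Let $\hat P=\mathrm{Spec}(B)$ be an affine extension of a principal $\mathbb{G}_a$-bundle $P\to S_*$ with $\hat P\not\simeq S\times\mathbb{G}_a$. If $\mathrm{gr}_D(B)$ is generated as an $\mathcal O(S)$-algebra by its elements of degree $1$, then the exceptional fiber $E=\hat\pi^{-1}(\mathbf x)$ consists of $\mathbb{G}_a$-fixed points only.
   Context: All varieties are over $\mathbb{C}$. $S$ normal affine surface, $\mathbf{x}\in S$ a closed regular point, $S_*=S\setminus\{\mathbf{x}\}$. An affine extension of $\pi\colon P\to S_*$ is a normal affine $\mathbb{G}_a$-variety $\hat P=\mathrm{Spec}(B)$ with a morphism $\hat\pi\colon\hat P\to S$ and a $\mathbb{G}_a$-equivariant dominant open embedding $\iota\colon P\hookrightarrow\hat P$ with $\iota(P)=\hat\pi^{-1}(S_* )$ and $\hat\pi\circ\iota=\pi$. $D$ is the locally nilpotent derivation of $B$ corresponding to the $\mathbb{G}_a$-action, $\ker D=\mathcal O(S)$, and $\mathrm{gr}_D(B)=\bigoplus_{\nu\ge0}\ker D^{\nu+1}/\ker D^{\nu}$. *)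

theory Defs
  imports Complex_Main
begin

text \<open>Commutative algebra over the complex numbers, rendered inside a domain type 'b.
  The C-algebra structure of B is given by a ring homomorphism emb from complex into 'b.\<close>

definition C_alg_hom :: "(complex \<Rightarrow> 'b::idom) \<Rightarrow> bool" where
  "C_alg_hom emb \<longleftrightarrow> emb 1 = 1 \<and> (\<forall>x y. emb (x + y) = emb x + emb y)
                      \<and> (\<forall>x y. emb (x * y) = emb x * emb y)"

inductive_set gen_alg :: "(complex \<Rightarrow> 'b::idom) \<Rightarrow> 'b set \<Rightarrow> 'b set"
  for emb :: "complex \<Rightarrow> 'b" and G :: "'b set" where
  scal: "emb c \<in> gen_alg emb G"
| gen: "g \<in> G \<Longrightarrow> g \<in> gen_alg emb G"
| add: "x \<in> gen_alg emb G \<Longrightarrow> y \<in> gen_alg emb G \<Longrightarrow> x + y \<in> gen_alg emb G"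
| mult: "x \<in> gen_alg emb G \<Longrightarrow> y \<in> gen_alg emb G \<Longrightarrow> x * y \<in> gen_alg emb G"

definition affine_alg :: "(complex \<Rightarrow> 'b::idom) \<Rightarrow> 'b set \<Rightarrow> bool" where
  "affine_alg emb R \<longleftrightarrow> (\<exists>G. finite G \<and> G \<subseteq> R \<and> gen_alg emb G = R)"

definition is_ideal :: "'b::idom set \<Rightarrow> 'b set \<Rightarrow> bool" where
  "is_ideal R I \<longleftrightarrow> I \<subseteq> R \<and> 0 \<in> I \<and> (\<forall>x\<in>I. \<forall>y\<in>I. x + y \<in> I)
                    \<and> (\<forall>r\<in>R. \<forall>x\<in>I. r * x \<in> I)"

definition prime_ideal_in :: "'b::idom set \<Rightarrow> 'b set \<Rightarrow> bool" where
  "prime_ideal_in R P \<longleftrightarrow> is_ideal R P \<and> P \<noteq> R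
      \<and> (\<forall>a\<in>R. \<forall>b\<in>R. a * b \<in> P \<longrightarrow> a \<in> P \<or> b \<in> P)"

definition maximal_ideal_in :: "'b::idom set \<Rightarrow> 'b set \<Rightarrow> bool" where
  "maximal_ideal_in R M \<longleftrightarrow> is_ideal R M \<and> M \<noteq> R
      \<and> (\<forall>I. is_ideal R I \<and> M \<subseteq> I \<longrightarrow> I = M \<or> I = R)"

definition prime_chain :: "'b::idom set \<Rightarrow> nat \<Rightarrow> bool" where
  "prime_chain R n \<longleftrightarrow> (\<exists>P. (\<forall>i\<le>n. prime_ideal_in R (P i)) \<and> (\<forall>i<n. P i \<subset> P (Suc i)))"

definition krull_dim_eq :: "'b::idom set \<Rightarrow> nat \<Rightarrow> bool" where
  "krull_dim_eq R n \<longleftrightarrow> prime_chain R n \<and> \<not> prime_chain R (Suc n)"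

text \<open>R (a subdomain) is integrally closed in its fraction field: whenever a/b (a, b in R,
  b nonzero) satisfies a monic equation over R, b divides a in R.\<close>
definition integrally_closed :: "'b::idom set \<Rightarrow> bool" where
  "integrally_closed R \<longleftrightarrow> (\<forall>a\<in>R. \<forall>b\<in>R. b \<noteq> 0 \<longrightarrow>
      (\<exists>n::nat. \<exists>c::nat \<Rightarrow> 'b. (\<forall>i. c i \<in> R) \<and>
          a ^ n + (\<Sum>i<n. c i * a ^ i * b ^ (n - i)) = 0) \<longrightarrow>
      (\<exists>q\<in>R. a = q * b))"

definition lnd :: "(complex \<Rightarrow> 'b::idom) \<Rightarrow> ('b \<Rightarrow> 'b) \<Rightarrow> bool" where
  "lnd emb D \<longleftrightarrow> (\<forall>x y. D (x + y) = D x + D y) \<and> (\<forall>x y. D (x * y) = x * D y + y * D x)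
      \<and> (\<forall>c. D (emb c) = 0) \<and> (\<forall>x. \<exists>n. (D ^^ n) x = 0)"

definition kerD :: "('b::idom \<Rightarrow> 'b) \<Rightarrow> 'b set" where
  "kerD D = {b. D b = 0}"

definition ideal_sq :: "'b::idom set \<Rightarrow> 'b set" where
  "ideal_sq m = {(\<Sum>i<k. y i * z i) | (k::nat) (y::nat \<Rightarrow> 'b) (z::nat \<Rightarrow> 'b). \<forall>i<k. y i \<in> m \<and> z i \<in> m}"

text \<open>A closed point of a surface Spec R (all maximal ideals of height 2) is regular iff
  dim m/m^2 \<le> 2, i.e. m is generated by two elements modulo m^2.\<close>
definition regular_max_ideal :: "'b::idom set \<Rightarrow> 'b set \<Rightarrow> bool" where
  "regular_max_ideal R m \<longleftrightarrow> maximal_ideal_in R m \<and>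
     (\<exists>f\<in>m. \<exists>g\<in>m. \<forall>x\<in>m. \<exists>u\<in>R. \<exists>v\<in>R. x - (u * f + v * g) \<in> ideal_sq m)"

text \<open>The restriction of Spec B \<rightarrow> Spec(ker D) over S_* = S minus the point m is a principal
  G_a-bundle: every closed point of S_* has a neighbourhood D(a) over which the
  action is trivial, i.e. there is s with D s = a in ker D and a not in that point.\<close>
definition principal_bundle_off :: "('b::idom \<Rightarrow> 'b) \<Rightarrow> 'b set \<Rightarrow> bool" where
  "principal_bundle_off D m \<longleftrightarrow> (\<forall>n. maximal_ideal_in (kerD D) n \<and> n \<noteq> m \<longrightarrow>
      (\<exists>s. D s \<in> kerD D \<and> D s \<notin> n))"

text \<open>Spec B is equivariantly S \<times> G_a over S: B = (ker D)[s] with D s = 1.\<close>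
definition trivial_extension :: "(complex \<Rightarrow> 'b::idom) \<Rightarrow> ('b \<Rightarrow> 'b) \<Rightarrow> bool" where
  "trivial_extension emb D \<longleftrightarrow> (\<exists>s. D s = 1 \<and> gen_alg emb (kerD D \<union> {s}) = UNIV)"

text \<open>gr_D(B) = \<Oplus> ker D^(\<nu>+1)/ker D^\<nu> is generated as a ker D-algebra by its degree-1
  elements: each element of ker D^(\<nu>+1) is, modulo ker D^\<nu>, a ker D-linear
  combination of products of \<nu> elements of ker D^2.\<close>
definition gr_generated_deg1 :: "('b::idom \<Rightarrow> 'b) \<Rightarrow> bool" where
  "gr_generated_deg1 D \<longleftrightarrow> (\<forall>\<nu>::nat. \<forall>b. (D ^^ Suc \<nu>) b = 0 \<longrightarrow>
     (\<exists>k::nat. \<exists>a::nat \<Rightarrow> 'b. \<exists>f::nat \<Rightarrow> nat \<Rightarrow> 'b.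
        (\<forall>j<k. D (a j) = 0 \<and> (\<forall>i<\<nu>. (D ^^ 2) (f j i) = 0)) \<and>
        (D ^^ \<nu>) (b - (\<Sum>j<k. a j * (\<Prod>i<\<nu>. f j i))) = 0))"

end

theory Submission
  imports Defs
begin

context
  fixes emb :: "complex \<Rightarrow> 'b::idom" and D :: "'b \<Rightarrow> 'b"
  assumes L: "lnd emb D"
begin

lemma Dadd: "D (x + y) = D x + D y" using L by (simp add: lnd_def)
lemma Dmult: "D (x * y) = x * D y + y * D x" using L by (simp add: lnd_def)
lemma Demb: "D (emb c) = 0" using L by (simp add: lnd_def)
lemma D0: "D 0 = 0" using Dadd[of 0 0] by (metis add_0 add_cancel_right_right)
lemma Ddiff: "D (x - y) = D x - D y"
  using Dadd[of "x - y" y] by (simp add: algebra_simps)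
lemma D1: "D 1 = 0" using Dmult[of 1 1] by (metis mult_1 add_cancel_right_right)
lemma Dofnat: "D (of_nat (k::nat)) = 0"
  by (induction k) (simp_all add: D0 Dadd D1)

lemma Dsum: "D (\<Sum>j<(k::nat). g j) = (\<Sum>j<k. D (g j))"
  by (induction k) (simp_all add: D0 Dadd)

lemma Dn_add: "(D ^^ n) (x + y) = (D ^^ n) x + (D ^^ n) y"
  by (induction n) (simp_all add: Dadd)

lemma Dn_diff: "(D ^^ n) (x - y) = (D ^^ n) x - (D ^^ n) y"
  using Dn_add[of n "x - y" y] by (simp add: algebra_simps)

lemma Dn_const: "D c = 0 \<Longrightarrow> (D ^^ n) (c * x) = c * (D ^^ n) x"
  by (induction n) (simp_all add: Dmult)

lemma D_pow: "D s = 1 \<Longrightarrow> D (s ^ Suc n) = of_nat (Suc n) * s ^ n"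
proof (induction n)
  case 0 then show ?case by simp
next
  case (Suc n)
  have "D (s ^ Suc (Suc n)) = D (s * s ^ Suc n)" by simp
  also have "\<dots> = s * (of_nat (Suc n) * s ^ n) + s ^ Suc n"
    using Suc by (simp add: Dmult)
  also have "\<dots> = of_nat (Suc (Suc n)) * s ^ Suc n" by (simp add: algebra_simps)
  finally show ?case .
qed

lemma Dn_pow: "D s = 1 \<Longrightarrow> (D ^^ n) (s ^ n) = of_nat (fact n)"
proof (induction n)
  case 0 then show ?case by simp
next
  case (Suc n)
  have "(D ^^ Suc n) (s ^ Suc n) = (D ^^ n) (D (s ^ Suc n))"
    by (simp only: funpow_Suc_right comp_def)
  also have "\<dots> = (D ^^ n) (of_nat (Suc n) * s ^ n)" using D_pow[OF Suc.prems] by simp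
  also have "\<dots> = of_nat (Suc n) * (D ^^ n) (s ^ n)"
    by (rule Dn_const[OF Dofnat])
  also have "\<dots> = of_nat (Suc n) * of_nat (fact n)"
    using Suc by simp
  also have "\<dots> = of_nat (fact (Suc n))" by (simp add: fact_Suc algebra_simps)
  finally show ?case .
qed

lemma D_prod_in:
  assumes qadd: "\<forall>x\<in>q. \<forall>y\<in>q. x + y \<in> q" and qmul: "\<forall>r x. x \<in> q \<longrightarrow> r * x \<in> q"
    and q0: "0 \<in> q" and qI: "\<forall>s. D (D s) = 0 \<longrightarrow> D s \<in> q"
  shows "(\<forall>i<(n::nat). D (D (f i)) = 0) \<Longrightarrow> D (\<Prod>i<n. f i) \<in> q"
proof (induction n)
  case 0 then show ?case using q0 by (simp add: D1)
next
  case (Suc n)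
  then have a: "D (\<Prod>i<n. f i) \<in> q" and b: "D (f n) \<in> q" using qI by auto
  show ?case using qadd qmul a b by (simp add: Dmult)
qed

lemma D_sum_in:
  assumes qadd: "\<forall>x\<in>q. \<forall>y\<in>q. x + y \<in> q" and qmul: "\<forall>r x. x \<in> q \<longrightarrow> r * x \<in> q"
    and q0: "0 \<in> q"
  shows "(\<forall>j<(k::nat). D (a j) = 0 \<and> D (P j) \<in> q) \<Longrightarrow> D (\<Sum>j<k. a j * P j) \<in> q"
proof (induction k)
  case 0 then show ?case using q0 by (simp add: D0)
next
  case (Suc k)
  then show ?case using qadd qmul by (simp add: Dmult Dadd)
qed

lemma D_in_ideal:
  assumes gr: "gr_generated_deg1 D"
    and qadd: "\<forall>x\<in>q. \<forall>y\<in>q. x + y \<in> q" and qmul: "\<forall>r x. x \<in> q \<longrightarrow> r * x \<in> q"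
    and q0: "0 \<in> q" and qI: "\<forall>s. D (D s) = 0 \<longrightarrow> D s \<in> q"
  shows "(D ^^ n) b = 0 \<Longrightarrow> D b \<in> q"
proof (induction n arbitrary: b)
  case 0 then show ?case using q0 by (simp add: D0)
next
  case (Suc n)
  note g = gr[unfolded gr_generated_deg1_def, rule_format, OF Suc.prems]
  from g obtain k :: nat and a f where
    h: "\<forall>j<k. D (a j) = 0 \<and> (\<forall>i<n. (D ^^ 2) (f j i) = 0)"
    and h2: "(D ^^ n) (b - (\<Sum>j<k. a j * (\<Prod>i<n. f j i))) = 0"
    by (elim exE conjE) (rule that)
  have 1: "D (b - (\<Sum>j<k. a j * (\<Prod>i<n. f j i))) \<in> q" using Suc.IH[OF h2] .
  have "\<forall>j<k. D (a j) = 0 \<and> D (\<Prod>i<n. f j i) \<in> q"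
  proof (intro allI impI conjI)
    fix j assume j: "j < k"
    then show "D (a j) = 0" using h by simp
    have "\<forall>i<n. D (D (f j i)) = 0" using h j by (simp add: numeral_2_eq_2)
    then show "D (\<Prod>i<n. f j i) \<in> q" by (rule D_prod_in[OF qadd qmul q0 qI])
  qed
  then have 2: "D (\<Sum>j<k. a j * (\<Prod>i<n. f j i)) \<in> q"
    by (rule D_sum_in[OF qadd qmul q0])
  have "D b = D (b - (\<Sum>j<k. a j * (\<Prod>i<n. f j i))) + D (\<Sum>j<k. a j * (\<Prod>i<n. f j i))"
    by (simp add: Ddiff)
  then show ?case using 1 2 qadd by simp
qed

lemma slice:
  assumes hom: "C_alg_hom emb" and s: "D s = 1"
  shows "(D ^^ n) b = 0 \<Longrightarrow> b \<in> gen_alg emb (kerD D \<union> {s})"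
proof (induction n arbitrary: b)
  case 0
  have ea: "emb (x + y) = emb x + emb y" for x y using hom unfolding C_alg_hom_def by blast
  have "emb 0 = emb 0 + emb 0" using ea[of 0 0] by simp
  then have e0: "emb 0 = 0" by (metis add_cancel_right_right)
  show ?case using gen_alg.scal[of emb 0 "kerD D \<union> {s}"] 0 by (simp add: e0)
next
  let ?G = "gen_alg emb (kerD D \<union> {s})"
  case (Suc n)
  have ea: "emb (x + y) = emb x + emb y" for x y using hom unfolding C_alg_hom_def by blast
  have e1: "emb 1 = 1" using hom unfolding C_alg_hom_def by blast
  have em: "emb (x * y) = emb x * emb y" for x y using hom unfolding C_alg_hom_def by blast
  have "emb 0 = emb 0 + emb 0" using ea[of 0 0] by simp
  then have e0: "emb 0 = 0" by (metis add_cancel_right_right)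
  have eofn: "emb (of_nat k) = of_nat k" for k
  proof (induction k)
    case 0 then show ?case using e0 by simp
  next
    case (Suc k)
    have "emb (of_nat (Suc k)) = emb (1 + of_nat k)" by simp
    also have "\<dots> = 1 + of_nat k" using ea e1 Suc by simp
    finally show ?case by simp
  qed
  define c where "c = (D ^^ n) b"
  have Dc: "D c = 0" using Suc.prems unfolding c_def by simp
  define e where "e = emb (1 / of_nat (fact n)) * c"
  have De: "D e = 0" unfolding e_def Dmult Dc Demb by simp
  have ee: "emb (1 / of_nat (fact n)) * of_nat (fact n) = 1"
  proof -
    have f: "1 / of_nat (fact n) * of_nat (fact n) = (1::complex)"
      using fact_nonzero[of n] by (simp del: of_nat_fact)
    have "emb (1 / of_nat (fact n)) * of_nat (fact n) = emb (1 / of_nat (fact n)) * emb (of_nat (fact n))"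
      by (simp only: eofn)
    also have "\<dots> = emb (1 / of_nat (fact n) * of_nat (fact n))" by (simp only: em)
    also have "\<dots> = 1" by (simp only: f e1)
    finally show ?thesis .
  qed
  have "(D ^^ n) (b - e * s ^ n) = c - e * (D ^^ n) (s ^ n)"
    unfolding c_def Dn_diff Dn_const[OF De] ..
  also have "\<dots> = c - c * (emb (1 / of_nat (fact n)) * of_nat (fact n))"
    unfolding Dn_pow[OF s] e_def by (simp only: mult.commute mult.left_commute)
  also have "\<dots> = 0" unfolding ee by simp
  finally have "(D ^^ n) (b - e * s ^ n) = 0" .
  then have 1: "b - e * s ^ n \<in> ?G" by (rule Suc.IH)
  have "e \<in> kerD D" using De by (simp add: kerD_def)
  then have eG: "e \<in> ?G" by (intro gen_alg.gen) blast
  have sG: "s \<in> ?G" by (intro gen_alg.gen) blast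
  have "s ^ k \<in> ?G" for k
  proof (induction k)
    case 0 then show ?case using gen_alg.scal[of emb 1 "kerD D \<union> {s}"] e1 by simp
  next
    case (Suc k) then show ?case using gen_alg.mult[OF sG Suc] by simp
  qed
  then have "e * s ^ n \<in> ?G" using gen_alg.mult[OF eG] by blast
  then have "(b - e * s ^ n) + e * s ^ n \<in> ?G" using gen_alg.add[OF 1] by blast
  then show ?case by simp
qed

end

theorem mainTheorem12:
  fixes emb :: "complex \<Rightarrow> 'b::idom" and D :: "'b \<Rightarrow> 'b" and m :: "'b set"
  assumes "C_alg_hom emb"
    and "affine_alg emb UNIV" and "integrally_closed (UNIV :: 'b set)"
    and "lnd emb D"
    and "affine_alg emb (kerD D)" and "integrally_closed (kerD D)"
    and "krull_dim_eq (kerD D) 2"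
    and "regular_max_ideal (kerD D) m"
    and "principal_bundle_off D m"
    and "\<not> trivial_extension emb D"
    and "gr_generated_deg1 D"
  shows "\<forall>q. maximal_ideal_in UNIV q \<and> m \<subseteq> q \<longrightarrow> range D \<subseteq> q"
proof -
  note L = assms(4)
  define I where "I = {D s | s. D (D s) = 0}"
  define K where "K = kerD D"
  have no1: "\<not> (\<exists>s. D s = 1)"
  proof
    assume "\<exists>s. D s = 1"
    then obtain s where s: "D s = 1" by blast
    have "b \<in> gen_alg emb (kerD D \<union> {s})" for b
    proof -
      obtain n where "(D ^^ n) b = 0" using L unfolding lnd_def by blast
      then show ?thesis using slice[OF L assms(1) s] by blast
    qed
    then show False using assms(10) s unfolding trivial_extension_def by blast
  qed
  have K1: "1 \<in> K" using D1[OF L] by (simp add: K_def kerD_def)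
  have IK: "is_ideal K I"
    unfolding is_ideal_def
  proof (intro conjI ballI)
    show "I \<subseteq> K" by (auto simp: I_def K_def kerD_def)
    show "0 \<in> I" unfolding I_def using D0[OF L] by (metis (mono_tags, lifting) mem_Collect_eq)
    fix x y assume "x \<in> I" "y \<in> I"
    then obtain a b where "x = D a" "D (D a) = 0" "y = D b" "D (D b) = 0" by (auto simp: I_def)
    then show "x + y \<in> I" unfolding I_def using Dadd[OF L]
      by (metis (mono_tags, lifting) add_0 mem_Collect_eq)
  next
    fix r x assume "r \<in> K" "x \<in> I"
    then obtain a where "x = D a" "D (D a) = 0" "D r = 0" by (auto simp: I_def K_def kerD_def)
    then have "r * x = D (r * a)" "D (D (r * a)) = 0" using Dmult[OF L] by (simp_all add: D0[OF L])
    then show "r * x \<in> I" unfolding I_def by blast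
  qed
  have ideal1: "1 \<notin> J \<longleftrightarrow> J \<noteq> K" if "is_ideal K J" for J
  proof
    assume "1 \<notin> J" then show "J \<noteq> K" using K1 by blast
  next
    assume "J \<noteq> K"
    show "1 \<notin> J"
    proof
      assume "1 \<in> J"
      then have "K \<subseteq> J" using that unfolding is_ideal_def by (metis mult.right_neutral subsetI)
      then show False using that \<open>J \<noteq> K\<close> unfolding is_ideal_def by blast
    qed
  qed
  define A where "A = {J. is_ideal K J \<and> I \<subseteq> J \<and> 1 \<notin> J}"
  have IA: "I \<in> A" unfolding A_def using IK no1 by (auto simp: I_def)
  have "\<exists>M\<in>A. \<forall>X\<in>A. M \<subseteq> X \<longrightarrow> X = M"
  proof (rule subset_Zorn_nonempty)
    show "A \<noteq> {}" using IA by blast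
  next
    fix C assume C: "C \<noteq> {}" "subset.chain A C"
    then have CA: "C \<subseteq> A" and ch: "\<forall>X\<in>C. \<forall>Y\<in>C. X \<subseteq> Y \<or> Y \<subseteq> X"
      by (auto simp: subset_chain_def)
    obtain X0 where X0: "X0 \<in> C" using C by blast
    show "\<Union>C \<in> A"
      unfolding A_def is_ideal_def
    proof (intro CollectI conjI ballI)
      show "\<Union>C \<subseteq> K" using CA by (auto simp: A_def is_ideal_def)
      show "0 \<in> \<Union>C" using CA X0 by (auto simp: A_def is_ideal_def)
      show "I \<subseteq> \<Union>C" using CA X0 by (auto simp: A_def)
      show "1 \<notin> \<Union>C" using CA by (auto simp: A_def)
      fix x y assume "x \<in> \<Union>C" "y \<in> \<Union>C"
      then obtain X Y where XY: "X \<in> C" "Y \<in> C" "x \<in> X" "y \<in> Y" by blast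
      show "x + y \<in> \<Union>C"
      proof (cases "X \<subseteq> Y")
        case True then have "x \<in> Y" "Y \<in> A" using XY CA by auto
        then have "x + y \<in> Y" using XY by (auto simp: A_def is_ideal_def)
        then show ?thesis using XY by blast
      next
        case False then have "Y \<subseteq> X" using ch XY by blast
        then have "y \<in> X" "X \<in> A" using XY CA by auto
        then have "x + y \<in> X" using XY by (auto simp: A_def is_ideal_def)
        then show ?thesis using XY by blast
      qed
    next
      fix r x assume "r \<in> K" "x \<in> \<Union>C"
      then obtain X where X: "X \<in> C" "x \<in> X" by blast
      then have "X \<in> A" using CA by blast
      then have "r * x \<in> X" using X \<open>r \<in> K\<close> by (auto simp: A_def is_ideal_def)
      then show "r * x \<in> \<Union>C" using X by blast
    qed
  qed
  then obtain M where MA: "M \<in> A" and Mmax: "\<forall>X\<in>A. M \<subseteq> X \<longrightarrow> X = M" by blast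
  have "maximal_ideal_in K M"
    unfolding maximal_ideal_in_def
  proof (intro conjI allI impI)
    show "is_ideal K M" using MA by (simp add: A_def)
    show "M \<noteq> K" using MA K1 by (auto simp: A_def)
    fix J assume J: "is_ideal K J \<and> M \<subseteq> J"
    show "J = M \<or> J = K"
    proof (cases "J = K")
      case False
      then have "1 \<notin> J" using ideal1 J by blast
      then have "J \<in> A" using J MA by (auto simp: A_def)
      then show ?thesis using Mmax J by blast
    qed simp
  qed
  have "M = m"
  proof (rule ccontr)
    assume "M \<noteq> m"
    then obtain s where "D s \<in> kerD D" "D s \<notin> M"
      using assms(9) \<open>maximal_ideal_in K M\<close> unfolding principal_bundle_off_def K_def by blast
    moreover have "D s \<in> I" using \<open>D s \<in> kerD D\<close> by (auto simp: I_def kerD_def)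
    ultimately show False using MA by (auto simp: A_def)
  qed
  then have Im: "I \<subseteq> m" using MA by (simp add: A_def)
  show ?thesis
  proof (intro allI impI subsetI)
    fix q x assume q: "maximal_ideal_in UNIV q \<and> m \<subseteq> q" and x: "x \<in> range D"
    have qi: "is_ideal UNIV q" using q by (simp add: maximal_ideal_in_def)
    have qadd: "\<forall>x\<in>q. \<forall>y\<in>q. x + y \<in> q" using qi by (simp add: is_ideal_def)
    have qmul: "\<forall>r x. x \<in> q \<longrightarrow> r * x \<in> q" using qi by (simp add: is_ideal_def)
    have q0: "0 \<in> q" using qi by (simp add: is_ideal_def)
    have qI: "\<forall>s. D (D s) = 0 \<longrightarrow> D s \<in> q"
    proof (intro allI impI)
      fix s assume "D (D s) = 0"
      then have "D s \<in> I" by (auto simp: I_def)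
      then show "D s \<in> q" using Im q by blast
    qed
    obtain b where b: "x = D b" using x by blast
    obtain n where "(D ^^ n) b = 0" using L unfolding lnd_def by blast
    then have "D b \<in> q" by (rule D_in_ideal[OF L assms(11) qadd qmul q0 qI])
    then show "x \<in> q" unfolding b .
  qed
qed

end
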